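(* Let $\mathcal{G}=(\mathcal{V},\mathcal{E})$ be an unweighted connected (finite, simple) graph, let $f:\mathcal{V}\to\mathbb{R}$ be a filtering function, and let $k\geq 1$ be an integer. Let $\mathcal{G}^{k+1}$ denote the $(k+1)$-core of $\mathcal{G}$, equipped with the restriction of $f$ to its vertex set (values not recomputed) and the same threshold set as $\mathcal{G}$. Then for every integer $j\geq k$, $$PD_j(\mathcal{G},f)=PD_j(\mathcal{G}^{k+1},f).$$
   Context: Graphs are finite, simple, undirected. For $f:\mathcal{V}\to\mathbb{R}$, let $\alpha_0<\alpha_1<\dots<\alpha_m$ be a threshold set with $\alpha_0=\min_{v\in \mathcal{V}} f(v)$ and $\alpha_m=\max_{v\in\mathcal{V}} f(v)$. For $0\le i\le m$, let $\mathcal{G}_i$ be the subgraph of $\mathcal{G}$ induced by $\mathcal{V}_i=\{v\in\mathcal{V}: f(v)\leq\alpha_i\}$, and let $\widehat{\mathcal{G}}_i$ be its clique (flag) complex: the simplicial complex whose $r$-simplices are the sets of $r+1$ pairwise adjacent vertices. The nested sequence $\widehat{\mathcal{G}}_0\subset\dots\subset\widehat{\mathcal{G}}_m$ is the sublevel filtration, and $PD_j(\mathcal{G},f)$ is the $j$-th persistence diagram of this filtration (the multiset of birth–death pairs of $j$-dimensional homology classes, homology with coefficients in a fixed field). For a subgraph $\mathcal{H}\subset\mathcal{G}$ with vertex set $\mathcal{W}\subset\mathcal{V}$, $PD_j(\mathcal{H},f)$ is defined the same way using $f|_{\mathcal{W}}$ and the same thresholds $\alpha_0,\dots,\alpha_m$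 (i.e. the $i$-th complex is the clique complex of the subgraph of $\mathcal{H}$ induced by $\{w\in\mathcal{W}: f(w)\le\alpha_i\}$). The $k$-core $\mathcal{G}^k$ of $\mathcal{G}$ is the subgraph obtained by iteratively deleting vertices (with their incident edges) of degree less than $k$; equivalently, the largest induced subgraph in which every vertex has degree at least $k$. *)

theory Defs
  imports Complex_Main "HOL-Library.Function_Algebras" "HOL-Library.Multiset"
    "HOL-Library.Extended_Real"
begin

definition simple_graph :: "'a set \<Rightarrow> 'a set set \<Rightarrow> bool" where
  "simple_graph V E \<longleftrightarrow> finite V \<and>
     (\<forall>e\<in>E. \<exists>u v. u \<in> V \<and> v \<in> V \<and> u \<noteq> v \<and> e = {u, v})"

definition connected_graph :: "'a set \<Rightarrow> 'a set set \<Rightarrow> bool" where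
  "connected_graph V E \<longleftrightarrow>
     (\<forall>u\<in>V. \<forall>v\<in>V. (u, v) \<in> {(x, y). {x, y} \<in> E}\<^sup>*)"

text \<open>Vertex set of the k-core: the largest W \<subseteq> V such that in the subgraph
  induced by W every vertex has degree at least k (the union of all such W,
  which again has this property).\<close>

definition core_verts :: "'a set \<Rightarrow> 'a set set \<Rightarrow> nat \<Rightarrow> 'a set" where
  "core_verts V E k = \<Union>{W. W \<subseteq> V \<and> (\<forall>v\<in>W. k \<le> card {u\<in>W. {u, v} \<in> E})}"

definition clique_cx :: "'a set set \<Rightarrow> 'a set \<Rightarrow> 'a set set" where
  "clique_cx E U = {\<sigma>. \<sigma> \<noteq> {} \<and> finite \<sigma> \<and> \<sigma> \<subseteq> U \<and>
       (\<forall>u\<in>\<sigma>. \<forall>v\<in>\<sigma>. u \<noteq> v \<longrightarrow> {u, v} \<in> E)}"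

definition simps :: "'a set set \<Rightarrow> nat \<Rightarrow> 'a set set" where
  "simps K j = {\<sigma>\<in>K. finite \<sigma> \<and> card \<sigma> = Suc j}"

definition chains :: "'a set set \<Rightarrow> nat \<Rightarrow> ('a set \<Rightarrow> 'k::field) set" where
  "chains K j = {c. \<forall>\<sigma>. c \<sigma> \<noteq> 0 \<longrightarrow> \<sigma> \<in> simps K j}"

text \<open>Orientation induced by the linear order on vertices: the sign of the
  face obtained by deleting the i-th vertex (counting from 0) is (-1)^i.\<close>

definition face_sign :: "'a::linorder set \<Rightarrow> 'a set \<Rightarrow> 'k::field" where
  "face_sign \<sigma> \<tau> = (-1) ^ card {v\<in>\<sigma>. v < the_elem (\<sigma> - \<tau>)}"

definition bd :: "'a::linorder set set \<Rightarrow> nat \<Rightarrow> ('a set \<Rightarrow> 'k::field) \<Rightarrow> ('a set \<Rightarrow> 'k)" where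
  "bd K j c = (\<lambda>\<tau>. if j = 0 then 0
      else if \<tau> \<in> simps K (j - 1)
      then (\<Sum>\<sigma>\<in>{\<sigma>\<in>simps K j. \<tau> \<subseteq> \<sigma>}. face_sign \<sigma> \<tau> * c \<sigma>)
      else 0)"

definition cycles :: "'a::linorder set set \<Rightarrow> nat \<Rightarrow> ('a set \<Rightarrow> 'k::field) set" where
  "cycles K j = {c\<in>chains K j. bd K j c = 0}"

definition boundaries :: "'a::linorder set set \<Rightarrow> nat \<Rightarrow> ('a set \<Rightarrow> 'k::field) set" where
  "boundaries K j = bd K (Suc j) ` chains K (Suc j)"

abbreviation chain_scale :: "'k::field \<Rightarrow> ('a set \<Rightarrow> 'k) \<Rightarrow> ('a set \<Rightarrow> 'k)" where
  "chain_scale \<equiv> (\<lambda>r c. (\<lambda>s. r * c s))"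

text \<open>Persistent Betti number: rank of the map H_j(K) \<rightarrow> H_j(L) induced by the
  inclusion K \<subseteq> L, i.e. dim((Z_j(K) + B_j(L)) / B_j(L)).\<close>

definition pbetti :: "'k::field itself \<Rightarrow> 'a::linorder set set \<Rightarrow> 'a set set \<Rightarrow> nat \<Rightarrow> nat" where
  "pbetti _ K L j =
     vector_space.dim (chain_scale :: 'k \<Rightarrow> _)
        {z + b | z b. z \<in> (cycles K j :: ('a set \<Rightarrow> 'k) set) \<and> b \<in> boundaries L j}
     - vector_space.dim (chain_scale :: 'k \<Rightarrow> _) (boundaries L j :: ('a set \<Rightarrow> 'k) set)"

definition filt :: "'a set set \<Rightarrow> 'a set \<Rightarrow> ('a \<Rightarrow> real) \<Rightarrow> (nat \<Rightarrow> real) \<Rightarrow> nat \<Rightarrow> 'a set set" where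
  "filt E U f \<alpha> i = clique_cx E {u\<in>U. f u \<le> \<alpha> i}"

definition fbeta :: "'k::field itself \<Rightarrow> 'a::linorder set set \<Rightarrow> 'a set \<Rightarrow> ('a \<Rightarrow> real)
     \<Rightarrow> (nat \<Rightarrow> real) \<Rightarrow> nat \<Rightarrow> nat \<Rightarrow> nat \<Rightarrow> int" where
  "fbeta K E U f \<alpha> j i l = int (pbetti K (filt E U f \<alpha> i) (filt E U f \<alpha> l) j)"

text \<open>j-th persistence diagram (Edelsbrunner--Harer): the point (alpha i, alpha l),
  i < l \<le> m, has multiplicity
  beta^{i,l-1} - beta^{i,l} - beta^{i-1,l-1} + beta^{i-1,l}, and the point
  (alpha i, \<infinity>) has multiplicity beta^{i,m} - beta^{i-1,m} (with beta^{-1,_} = 0).\<close>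

definition PD :: "'k::field itself \<Rightarrow> 'a::linorder set set \<Rightarrow> 'a set \<Rightarrow> ('a \<Rightarrow> real)
     \<Rightarrow> (nat \<Rightarrow> real) \<Rightarrow> nat \<Rightarrow> nat \<Rightarrow> (real \<times> ereal) multiset" where
  "PD K E U f \<alpha> m j =
     (let \<beta> = fbeta K E U f \<alpha> j;
          \<beta>' = (\<lambda>i l. if i = 0 then 0 else \<beta> (i - 1) l)
      in (\<Sum>l\<in>{1..m}. \<Sum>i\<in>{0..<l}.
            replicate_mset (nat (\<beta> i (l - 1) - \<beta> i l - \<beta>' i (l - 1) + \<beta>' i l))
              (\<alpha> i, ereal (\<alpha> l)))
       + (\<Sum>i\<in>{0..m}. replicate_mset (nat (\<beta> i m - \<beta>' i m)) (\<alpha> i, PInfty)))"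

end

theory Submission
  imports Defs
begin

lemma clique_cx_mono: "U' \<subseteq> U \<Longrightarrow> clique_cx E U' \<subseteq> clique_cx E U"
  unfolding clique_cx_def by auto

lemma clique_cx_Int: "\<sigma> \<in> clique_cx E (U \<inter> W) \<longleftrightarrow> \<sigma> \<in> clique_cx E U \<and> \<sigma> \<subseteq> W"
  unfolding clique_cx_def by auto

lemma clique_cx_face: "\<sigma> \<in> clique_cx E U \<Longrightarrow> \<tau> \<subseteq> \<sigma> \<Longrightarrow> \<tau> \<noteq> {} \<Longrightarrow> \<tau> \<in> clique_cx E U"
  unfolding clique_cx_def by (auto intro: finite_subset)

lemma finite_simps: "finite U \<Longrightarrow> finite (simps (clique_cx E U) j)"
  by (rule finite_subset[of _ "Pow U"]) (auto simp: simps_def clique_cx_def)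

lemma clique_nbrs: "\<sigma> \<in> clique_cx E U \<Longrightarrow> v \<in> \<sigma> \<Longrightarrow> \<sigma> \<subseteq> X \<Longrightarrow> \<sigma> - {v} \<subseteq> {u\<in>X. {u,v}\<in>E}"
  unfolding clique_cx_def by auto

lemma bd_sub:
  assumes "finite U" "U' \<subseteq> U" "c \<in> chains (clique_cx E U') j"
  shows "bd (clique_cx E U) j c = bd (clique_cx E U') j c"
proof (rule ext)
  fix \<tau>
  let ?K = "clique_cx E U" and ?K' = "clique_cx E U'"
  have sub: "simps ?K' n \<subseteq> simps ?K n" for n using clique_cx_mono[OF assms(2)] by (auto simp: simps_def)
  have cz: "c \<sigma> = 0" if "\<sigma> \<notin> simps ?K' j" for \<sigma> using assms(3) that by (auto simp: chains_def)
  show "bd ?K j c \<tau> = bd ?K' j c \<tau>"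
  proof (cases "j = 0")
    case True then show ?thesis by (simp add: bd_def)
  next
    case False
    show ?thesis
    proof (cases "\<tau> \<in> simps ?K' (j-1)")
      case True
      then have "\<tau> \<in> simps ?K (j-1)" using sub by blast
      moreover have "(\<Sum>\<sigma>\<in>{\<sigma>\<in>simps ?K j. \<tau> \<subseteq> \<sigma>}. face_sign \<sigma> \<tau> * c \<sigma>) = (\<Sum>\<sigma>\<in>{\<sigma>\<in>simps ?K' j. \<tau> \<subseteq> \<sigma>}. face_sign \<sigma> \<tau> * c \<sigma>)"
        by (rule sum.mono_neutral_right) (use assms(1) sub cz in \<open>auto intro: finite_subset[OF _ finite_simps]\<close>)
      ultimately show ?thesis using True False by (simp add: bd_def)
    next
      case nT: False
      show ?thesis
      proof (cases "\<tau> \<in> simps ?K (j-1)")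
        case False then show ?thesis using nT by (simp add: bd_def)
      next
        case True
        have "(\<Sum>\<sigma>\<in>{\<sigma>\<in>simps ?K j. \<tau> \<subseteq> \<sigma>}. face_sign \<sigma> \<tau> * c \<sigma>) = 0"
        proof (rule sum.neutral, safe)
          fix \<sigma> assume \<sigma>: "\<sigma> \<in> simps ?K j" "\<tau> \<subseteq> \<sigma>"
          have "c \<sigma> = 0"
          proof (rule cz, rule notI)
            assume s: "\<sigma> \<in> simps ?K' j"
            have "\<tau> \<noteq> {}" using True by (auto simp: simps_def)
            moreover have "\<sigma> \<in> ?K'" using s by (simp add: simps_def)
            ultimately have "\<tau> \<in> ?K'" using \<sigma>(2) clique_cx_face by blast
            then have "\<tau> \<in> simps ?K' (j-1)" using True by (auto simp: simps_def)
            then show False using nT by blast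
          qed
          then show "face_sign \<sigma> \<tau> * c \<sigma> = 0" by simp
        qed
        then show ?thesis using nT False by (simp add: bd_def)
      qed
    qed
  qed
qed

lemma core_facts:
  fixes k :: nat
  assumes sg: "simple_graph V E"
  defines "W \<equiv> core_verts V E (Suc k)"
  shows "W \<subseteq> V" and "\<forall>v\<in>W. Suc k \<le> card {u\<in>W. {u,v}\<in>E}"
    and "\<And>X. X \<subseteq> V \<Longrightarrow> \<not> X \<subseteq> W \<Longrightarrow> \<exists>v\<in>X-W. card {u\<in>X. {u,v}\<in>E} \<le> k"
proof -
  have fin: "finite V" using sg by (simp add: simple_graph_def)
  show WV: "W \<subseteq> V" unfolding W_def core_verts_def by auto
  show deg: "\<forall>v\<in>W. Suc k \<le> card {u\<in>W. {u,v}\<in>E}"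
  proof
    fix v assume "v \<in> W"
    then obtain W0 where W0: "W0 \<subseteq> V" "\<forall>v\<in>W0. Suc k \<le> card {u\<in>W0. {u, v} \<in> E}" "v \<in> W0"
      unfolding W_def core_verts_def by auto
    have "W0 \<subseteq> W" using W0 unfolding W_def core_verts_def by auto
    then have "card {u\<in>W0. {u, v} \<in> E} \<le> card {u\<in>W. {u, v} \<in> E}"
      by (intro card_mono) (use WV fin in \<open>auto intro: finite_subset\<close>)
    then show "Suc k \<le> card {u\<in>W. {u,v}\<in>E}" using W0 by auto
  qed
  fix X assume X: "X \<subseteq> V" "\<not> X \<subseteq> W"
  let ?Y = "X \<union> W"
  have "\<not> (\<forall>v\<in>?Y. Suc k \<le> card {u\<in>?Y. {u,v}\<in>E})"
  proof
    assume "\<forall>v\<in>?Y. Suc k \<le> card {u\<in>?Y. {u,v}\<in>E}"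
    moreover have "?Y \<subseteq> V" using X WV by blast
    ultimately have "?Y \<in> {W. W \<subseteq> V \<and> (\<forall>v\<in>W. Suc k \<le> card {u\<in>W. {u, v} \<in> E})}" by blast
    then have "?Y \<subseteq> W" unfolding W_def core_verts_def by (rule Union_upper)
    then show False using X by auto
  qed
  then obtain v where v: "v \<in> ?Y" "\<not> Suc k \<le> card {u\<in>?Y. {u,v}\<in>E}" by blast
  then have v2: "card {u\<in>?Y. {u,v}\<in>E} \<le> k" by simp
  have fY: "finite ?Y" using X WV fin by (auto intro: finite_subset)
  have "v \<notin> W"
  proof
    assume "v \<in> W"
    then have "Suc k \<le> card {u\<in>W. {u,v}\<in>E}" using deg by auto
    also have "\<dots> \<le> card {u\<in>?Y. {u,v}\<in>E}" by (intro card_mono) (use fY in auto)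
    finally show False using v2 by simp
  qed
  moreover have "card {u\<in>X. {u,v}\<in>E} \<le> card {u\<in>?Y. {u,v}\<in>E}" by (intro card_mono) (use fY in auto)
  ultimately show "\<exists>v\<in>X-W. card {u\<in>X. {u,v}\<in>E} \<le> k" using v v2 by (meson DiffI UnE le_trans)
qed

lemma big_simp_in_core:
  assumes sg: "simple_graph V E" and UV: "U \<subseteq> V" and "Suc k \<le> n"
    and s: "\<sigma> \<in> simps (clique_cx E U) n"
  shows "\<sigma> \<subseteq> core_verts V E (Suc k)"
proof (rule ccontr)
  assume nW: "\<not> ?thesis"
  have sK: "\<sigma> \<in> clique_cx E U" and cs: "card \<sigma> = Suc n" and fs: "finite \<sigma>" using s by (auto simp: simps_def)
  have "\<sigma> \<subseteq> V" using sK UV by (auto simp: clique_cx_def)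
  then obtain v where v: "v \<in> \<sigma>" "card {u\<in>\<sigma>. {u,v}\<in>E} \<le> k"
    using core_facts(3)[OF sg _ nW] by auto
  have "card (\<sigma> - {v}) \<le> card {u\<in>\<sigma>. {u,v}\<in>E}"
    by (intro card_mono) (use fs clique_nbrs[OF sK v(1)] in auto)
  moreover have "card (\<sigma> - {v}) = n" using cs v fs by simp
  ultimately show False using v assms(3) by simp
qed

lemma cycle_in_core:
  assumes sg: "simple_graph V E" and UV: "U \<subseteq> V" and k1: "1 \<le> k"
    and z: "z \<in> cycles (clique_cx E U) k"
  shows "z \<sigma> \<noteq> 0 \<Longrightarrow> \<sigma> \<subseteq> core_verts V E (Suc k)"
proof (rule ccontr)
  let ?W = "core_verts V E (Suc k)" and ?K = "clique_cx E U"
  assume nz: "z \<sigma> \<noteq> 0" and nW: "\<not> \<sigma> \<subseteq> ?W"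
  have finV: "finite V" using sg by (simp add: simple_graph_def)
  have zch: "z \<in> chains ?K k" and zbd: "bd ?K k z = 0" using z by (auto simp: cycles_def)
  define S where "S = {\<sigma>. z \<sigma> \<noteq> 0 \<and> \<not> \<sigma> \<subseteq> ?W}"
  have Ss: "S \<subseteq> simps ?K k" using zch by (auto simp: S_def chains_def)
  define X where "X = \<Union>S"
  have XV: "X \<subseteq> V" unfolding X_def
  proof
    fix x assume "x \<in> \<Union>S"
    then obtain \<rho> where "\<rho> \<in> S" "x \<in> \<rho>" by blast
    then have "\<rho> \<in> ?K" using Ss by (auto simp: simps_def)
    then show "x \<in> V" using \<open>x \<in> \<rho>\<close> UV by (auto simp: clique_cx_def)
  qed
  have "\<sigma> \<in> S" using nz nW by (auto simp: S_def)
  then have "\<not> X \<subseteq> ?W" using nW by (auto simp: X_def)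
  then obtain v where v: "v \<in> X" "v \<notin> ?W" and cN: "card {u\<in>X. {u,v}\<in>E} \<le> k"
    using core_facts(3)[OF sg XV] by auto
  define N where "N = {u\<in>X. {u,v}\<in>E}"
  have fN: "finite N" using XV finV by (auto simp: N_def intro: finite_subset)
  have key: "\<rho> - {v} = N" if "\<rho> \<in> S" "v \<in> \<rho>" for \<rho>
  proof -
    have rs: "\<rho> \<in> simps ?K k" using that Ss by auto
    then have rK: "\<rho> \<in> ?K" and cr: "card \<rho> = Suc k" and fr: "finite \<rho>" by (auto simp: simps_def)
    have "\<rho> \<subseteq> X" using that by (auto simp: X_def)
    then have sub: "\<rho> - {v} \<subseteq> N" using clique_nbrs[OF rK that(2)] by (auto simp: N_def)
    have "card (\<rho> - {v}) = k" using cr that fr by simp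
    then show ?thesis using card_seteq[OF fN sub] cN by (auto simp: N_def)
  qed
  obtain \<sigma>0 where s0: "\<sigma>0 \<in> S" "v \<in> \<sigma>0" using v by (auto simp: X_def)
  have s0s: "\<sigma>0 \<in> simps ?K k" using s0 Ss by auto
  then have s0K: "\<sigma>0 \<in> ?K" and cs0: "card \<sigma>0 = Suc k" and fs0: "finite \<sigma>0" by (auto simp: simps_def)
  have "card (\<sigma>0 - {v}) = k" using cs0 s0 fs0 by simp
  then have "\<sigma>0 - {v} \<noteq> {}" using k1 by (metis card.empty not_one_le_zero)
  then obtain w where w: "w \<in> \<sigma>0" "w \<noteq> v" by auto
  define \<tau> where "\<tau> = \<sigma>0 - {w}"
  have vt: "v \<in> \<tau>" using w s0 by (auto simp: \<tau>_def)
  have tK: "\<tau> \<in> ?K" using clique_cx_face[OF s0K, of \<tau>] vt by (auto simp: \<tau>_def)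
  have "card \<tau> = k" using cs0 w fs0 by (simp add: \<tau>_def)
  then have ts: "\<tau> \<in> simps ?K (k-1)" using tK k1 fs0 by (auto simp: simps_def \<tau>_def)
  let ?A = "{\<rho>\<in>simps ?K k. \<tau> \<subseteq> \<rho>}"
  have finA: "finite ?A" using finite_simps[of U E k] UV finV by (auto intro: finite_subset)
  have memA: "\<sigma>0 \<in> ?A" using s0s by (auto simp: \<tau>_def)
  have rest: "(\<Sum>\<rho>\<in>?A - {\<sigma>0}. face_sign \<rho> \<tau> * z \<rho>) = 0"
  proof (rule sum.neutral, rule ballI)
    fix \<rho> assume r0: "\<rho> \<in> ?A - {\<sigma>0}"
    then have r: "\<rho> \<in> ?A" "\<rho> \<noteq> \<sigma>0" by auto
    show "face_sign \<rho> \<tau> * z \<rho> = 0"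
    proof (cases "z \<rho> = 0")
      case False
      have vr: "v \<in> \<rho>" using r vt by auto
      then have "\<rho> \<in> S" using False v by (auto simp: S_def)
      then have "\<rho> - {v} = \<sigma>0 - {v}" using key[OF _ vr] key[OF s0] by simp
      then have "\<rho> = \<sigma>0" using vr s0 by blast
      then show ?thesis using r by simp
    qed simp
  qed
  have "(\<Sum>\<rho>\<in>?A. face_sign \<rho> \<tau> * z \<rho>) = face_sign \<sigma>0 \<tau> * z \<sigma>0"
    using sum.remove[OF finA memA, of "\<lambda>\<rho>. face_sign \<rho> \<tau> * z \<rho>"] rest by simp
  moreover have "face_sign \<sigma>0 \<tau> * z \<sigma>0 \<noteq> 0" using s0 by (auto simp: S_def face_sign_def)
  ultimately have "bd ?K k z \<tau> \<noteq> 0" using ts k1 by (simp add: bd_def)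
  then show False using zbd by simp
qed

lemma cyc_bd_eq:
  fixes k j :: nat
  assumes sg: "simple_graph V E" and UV: "U \<subseteq> V" and k1: "1 \<le> k" and kj: "k \<le> j"
  defines "W \<equiv> core_verts V E (Suc k)"
  shows "(cycles (clique_cx E U) j :: ('a::linorder set \<Rightarrow> 'b::field) set) = cycles (clique_cx E (U \<inter> W)) j"
    and "(boundaries (clique_cx E U) j :: ('a set \<Rightarrow> 'b) set) = boundaries (clique_cx E (U \<inter> W)) j"
proof -
  let ?K = "clique_cx E U" and ?K' = "clique_cx E (U \<inter> W)"
  have finU: "finite U" using sg UV by (auto simp: simple_graph_def intro: finite_subset)
  have sub: "simps ?K' n \<subseteq> simps ?K n" for n using clique_cx_mono[of "U \<inter> W" U E] by (auto simp: simps_def)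
  have seq: "simps ?K n = simps ?K' n" if "Suc k \<le> n" for n
    using sub big_simp_in_core[OF sg UV that] by (auto simp: simps_def clique_cx_Int W_def)
  show "(cycles ?K j :: ('a set \<Rightarrow> 'b) set) = cycles ?K' j"
  proof
    show "(cycles ?K' j :: ('a set \<Rightarrow> 'b) set) \<subseteq> cycles ?K j"
    proof
      fix z :: "'a set \<Rightarrow> 'b" assume z: "z \<in> cycles ?K' j"
      then have zc: "z \<in> chains ?K' j" by (simp add: cycles_def)
      then have "z \<in> chains ?K j" using sub by (auto simp: chains_def)
      then show "z \<in> cycles ?K j" using z bd_sub[OF finU _ zc] by (simp add: cycles_def)
    qed
  next
    show "(cycles ?K j :: ('a set \<Rightarrow> 'b) set) \<subseteq> cycles ?K' j"
    proof
      fix z :: "'a set \<Rightarrow> 'b" assume z: "z \<in> cycles ?K j"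
      have zc: "z \<in> chains ?K' j" unfolding chains_def
      proof (safe)
        fix \<sigma> assume nz: "z \<sigma> \<noteq> 0"
        then have s: "\<sigma> \<in> simps ?K j" using z by (auto simp: cycles_def chains_def)
        show "\<sigma> \<in> simps ?K' j"
        proof (cases "j = k")
          case True
          then have "\<sigma> \<subseteq> W" using cycle_in_core[OF sg UV k1, of z] z nz by (simp add: W_def)
          then show ?thesis using s by (auto simp: simps_def clique_cx_Int)
        next
          case False
          then show ?thesis using s seq[of j] kj by simp
        qed
      qed
      then show "z \<in> cycles ?K' j" using z bd_sub[OF finU _ zc] by (simp add: cycles_def)
    qed
  qed
  have ceq: "(chains ?K (Suc j) :: ('a set \<Rightarrow> 'b) set) = chains ?K' (Suc j)"
    using seq[of "Suc j"] kj by (simp add: chains_def)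
  show "(boundaries ?K j :: ('a set \<Rightarrow> 'b) set) = boundaries ?K' j"
    unfolding boundaries_def ceq
    by (rule image_cong[OF refl]) (rule bd_sub[OF finU], auto)
qed

theorem theorem1:
  fixes V :: "'a::linorder set" and E :: "'a set set" and f :: "'a \<Rightarrow> real"
    and \<alpha> :: "nat \<Rightarrow> real" and m k j :: nat
  assumes "simple_graph V E" and "connected_graph V E" and "V \<noteq> {}"
    and "\<forall>i<m. \<alpha> i < \<alpha> (Suc i)"
    and "\<alpha> 0 = Min (f ` V)" and "\<alpha> m = Max (f ` V)"
    and "1 \<le> k" and "k \<le> j"
  shows "PD TYPE('k::field) E V f \<alpha> m j = PD TYPE('k) E (core_verts V E (Suc k)) f \<alpha> m j"
proof -
  let ?W = "core_verts V E (Suc k)"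
  have WV: "?W \<subseteq> V" using core_facts(1)[OF assms(1)] .
  have fe: "filt E ?W f \<alpha> i = clique_cx E ({u\<in>V. f u \<le> \<alpha> i} \<inter> ?W)" for i
    unfolding filt_def using WV by (intro arg_cong[where f="clique_cx E"]) auto
  have fv: "filt E V f \<alpha> i = clique_cx E {u\<in>V. f u \<le> \<alpha> i}" for i by (simp add: filt_def)
  have "fbeta TYPE('k) E V f \<alpha> j = fbeta TYPE('k) E ?W f \<alpha> j"
  proof (intro ext)
    fix i l
    show "fbeta TYPE('k) E V f \<alpha> j i l = fbeta TYPE('k) E ?W f \<alpha> j i l"
      unfolding fbeta_def pbetti_def fe fv
      using cyc_bd_eq[OF assms(1) _ assms(7) assms(8), where 'b='k]
      by (simp del: Collect_conj_eq)
  qed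
  then show ?thesis unfolding PD_def by simp
qed

end
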